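(* Let $f:\mathbb{Z}^n\to\mathbb{Z}\cup\{+\infty\}$ be an integer-valued M-convex function with bounded $\operatorname{dom} f$ and $x_0\in\operatorname{dom} f$. If algorithm M-LSD2 started at $x_0$ performs exactly $k$ calls of M-IncSlope before terminating, then $\tfrac12 k^2\le f(x_0)-\min\{f(x): x\in\operatorname{dom} f\}$; hence $k\le\sqrt{2\,(f(x_0)-\min f)}$.
   Context: $N=\{1,\dots,n\}$; $\chi_i\in\{0,1\}^n$ is the $i$-th unit vector. For $f:\mathbb{Z}^n\to\mathbb{R}\cup\{+\infty\}$, $\operatorname{dom} f=\{x\in\mathbb{Z}^n: f(x)<+\infty\}$. $f$ is M-convex if $\operatorname{dom} f\neq\emptyset$ and for all $x,y\in\operatorname{dom} f$ and every $i$ with $x(i)>y(i)$ there is $j$ with $x(j)<y(j)$ such that $f(x)+f(y)\ge f(x-\chi_i+\chi_j)+f(y+\chi_i-\chi_j)$. For $x\in\operatorname{dom} f$ and $i,j\in N$, $f'(x;i,j)=f(x+\chi_i-\chi_j)-f(x)$ (possibly $+\infty$; $f'(x;i,i)=0$), and $\phi(x)=\min_{i,j\in N}f'(x;i,j)$. Step length: $\bar c(y;i,j)=\max\{\lambda\in\mathbb{Z}_{\ge 0}: f(y+\lambda(\chi_i-\chi_j))-f(y)=\lambda f'(y;i,j)\}$. Procedure M-IncSlope$(x)$ (for $\phi(x)<0$): set $y:=x$; for each $i\in N$ (each once, arbitrary order) and for each $j\in N\setminus\{i\}$ (each once, arbitrary order), if $f'(y;i,j)=\phi(x)$ replace $y$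 by $y+\bar c(y;i,j)(\chi_i-\chi_j)$; output $y$. Algorithm M-LSD2: $x:=x_0$; while $\phi(x)<0$, replace $x$ by the output of M-IncSlope$(x)$; output $x$ once $\phi(x)=0$. *)

theory Defs
  imports Main "HOL-Library.Extended_Real"
begin

(* Points of Z^n are functions 'a => int over a finite index type 'a (N = UNIV).
   Functions f : Z^n -> Z \<union> {+\<infinity>} are modelled as ('a => int) => ereal. *)

definition unitv :: "'a \<Rightarrow> 'a \<Rightarrow> int" where
  "unitv i = (\<lambda>k. if k = i then 1 else 0)"

definition mdom :: "(('a \<Rightarrow> int) \<Rightarrow> ereal) \<Rightarrow> ('a \<Rightarrow> int) set" where
  "mdom f = {x. f x < \<infinity>}"

definition int_valued :: "(('a \<Rightarrow> int) \<Rightarrow> ereal) \<Rightarrow> bool" where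
  "int_valued f \<longleftrightarrow> (\<forall>x. f x = \<infinity> \<or> (\<exists>m::int. f x = ereal (of_int m)))"

definition bounded_dom :: "(('a \<Rightarrow> int) \<Rightarrow> ereal) \<Rightarrow> bool" where
  "bounded_dom f \<longleftrightarrow> (\<exists>B::int. \<forall>x\<in>mdom f. \<forall>i. \<bar>x i\<bar> \<le> B)"

definition M_convex :: "(('a \<Rightarrow> int) \<Rightarrow> ereal) \<Rightarrow> bool" where
  "M_convex f \<longleftrightarrow> mdom f \<noteq> {} \<and>
     (\<forall>x\<in>mdom f. \<forall>y\<in>mdom f. \<forall>i. x i > y i \<longrightarrow>
        (\<exists>j. x j < y j \<and>
           f x + f y \<ge> f (\<lambda>k. x k - unitv i k + unitv j k) + f (\<lambda>k. y k + unitv i k - unitv j k)))"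

definition shift :: "('a \<Rightarrow> int) \<Rightarrow> int \<Rightarrow> 'a \<Rightarrow> 'a \<Rightarrow> ('a \<Rightarrow> int)" where
  "shift y l i j = (\<lambda>k. y k + l * (unitv i k - unitv j k))"

definition fder :: "(('a \<Rightarrow> int) \<Rightarrow> ereal) \<Rightarrow> ('a \<Rightarrow> int) \<Rightarrow> 'a \<Rightarrow> 'a \<Rightarrow> ereal" where
  "fder f x i j = (if i = j then 0 else f (shift x 1 i j) - f x)"

definition phi :: "(('a::finite \<Rightarrow> int) \<Rightarrow> ereal) \<Rightarrow> ('a \<Rightarrow> int) \<Rightarrow> ereal" where
  "phi f x = Min {fder f x i j | i j. True}"

definition cbar :: "(('a \<Rightarrow> int) \<Rightarrow> ereal) \<Rightarrow> ('a \<Rightarrow> int) \<Rightarrow> 'a \<Rightarrow> 'a \<Rightarrow> nat" where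
  "cbar f y i j = Max {l::nat. f (shift y (int l) i j) - f y = ereal (real l) * fder f y i j}"

(* the sequence of updates of M-IncSlope along a given list of pairs (i,j), with slope value c = phi(x) *)
definition incslope_pass ::
  "(('a \<Rightarrow> int) \<Rightarrow> ereal) \<Rightarrow> ereal \<Rightarrow> ('a \<Rightarrow> int) \<Rightarrow> ('a \<times> 'a) list \<Rightarrow> ('a \<Rightarrow> int)" where
  "incslope_pass f c y ps =
     fold (\<lambda>(i,j) z. if fder f z i j = c then shift z (int (cbar f z i j)) i j else z) ps y"

(* y is a possible output of M-IncSlope(x), for some choice of the (arbitrary) orders *)
definition IncSlope_out :: "(('a::finite \<Rightarrow> int) \<Rightarrow> ereal) \<Rightarrow> ('a \<Rightarrow> int) \<Rightarrow> ('a \<Rightarrow> int) \<Rightarrow> bool" where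
  "IncSlope_out f x y \<longleftrightarrow>
     (\<exists>is :: 'a list. \<exists>js :: 'a \<Rightarrow> 'a list.
        distinct is \<and> set is = UNIV \<and>
        (\<forall>i. distinct (js i) \<and> set (js i) = UNIV - {i}) \<and>
        y = incslope_pass f (phi f x) x (concat (map (\<lambda>i. map (\<lambda>j. (i, j)) (js i)) is)))"

definition LSD2_run :: "(('a::finite \<Rightarrow> int) \<Rightarrow> ereal) \<Rightarrow> ('a \<Rightarrow> int) \<Rightarrow> nat \<Rightarrow> bool" where
  "LSD2_run f x0 k \<longleftrightarrow>
     (\<exists>xs :: nat \<Rightarrow> ('a \<Rightarrow> int). xs 0 = x0 \<and>
        (\<forall>t<k. phi f (xs t) < 0 \<and> IncSlope_out f (xs t) (xs (Suc t))) \<and>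
        phi f (xs k) = 0)"

end

theory Submission
  imports Defs
begin

lemma shift_add[simp]: "shift (shift z a i j) b i j = shift z (a+b) i j"
  by (rule ext) (simp add: shift_def algebra_simps)
lemma shift_0[simp]: "shift z 0 i j = z"
  by (rule ext) (simp add: shift_def)
lemma shift_same[simp]: "shift z l i i = z"
  by (rule ext) (simp add: shift_def)

locale mc =
  fixes f :: "('a::finite \<Rightarrow> int) \<Rightarrow> ereal"
  assumes MC: "M_convex f" and IV: "int_valued f" and BD: "bounded_dom f"
begin

definition v :: "('a \<Rightarrow> int) \<Rightarrow> int" where
  "v x = (THE m. f x = ereal (of_int m))"

lemma fv: assumes "x \<in> mdom f" shows "f x = ereal (of_int (v x))"
proof -
  from assms have "f x \<noteq> \<infinity>" by (simp add: mdom_def)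
  with IV obtain m where m: "f x = ereal (of_int m)" unfolding int_valued_def by blast
  have "v x = m" unfolding v_def by (rule the_equality) (use m in auto)
  with m show ?thesis by simp
qed

lemma notD: "x \<notin> mdom f \<Longrightarrow> f x = \<infinity>"
  by (simp add: mdom_def)

lemma exch:
  assumes "x \<in> mdom f" "y \<in> mdom f" "x i > y i"
  shows "\<exists>j. x j < y j \<and> shift x (-1) i j \<in> mdom f \<and> shift y 1 i j \<in> mdom f
     \<and> v (shift x (-1) i j) + v (shift y 1 i j) \<le> v x + v y"
proof -
  from MC assms obtain j where j: "x j < y j"
    and le: "f x + f y \<ge> f (\<lambda>k. x k - unitv i k + unitv j k) + f (\<lambda>k. y k + unitv i k - unitv j k)"
    unfolding M_convex_def by blast
  have e1: "(\<lambda>k. x k - unitv i k + unitv j k) = shift x (-1) i j"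
    by (rule ext) (simp add: shift_def)
  have e2: "(\<lambda>k. y k + unitv i k - unitv j k) = shift y 1 i j"
    by (rule ext) (simp add: shift_def)
  have fin: "f x + f y = ereal (of_int (v x + v y))" using assms by (simp add: fv)
  have A: "shift x (-1) i j \<in> mdom f"
  proof (rule ccontr)
    assume "\<not> ?thesis"
    hence "f (shift x (-1) i j) = \<infinity>" by (rule notD)
    moreover have "f (shift y 1 i j) \<noteq> -\<infinity>"
      by (cases "shift y 1 i j \<in> mdom f") (auto simp: fv notD)
    ultimately show False using le fin e1 e2 by simp
  qed
  have B: "shift y 1 i j \<in> mdom f"
  proof (rule ccontr)
    assume "\<not> ?thesis"
    hence "f (shift y 1 i j) = \<infinity>" by (rule notD)
    moreover have "f (shift x (-1) i j) \<noteq> -\<infinity>" using A by (simp add: fv)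
    ultimately show False using le fin e1 e2 by simp
  qed
  have "v (shift x (-1) i j) + v (shift y 1 i j) \<le> v x + v y"
    using le fin e1 e2 A B by (simp add: fv)
  with j A B show ?thesis by blast
qed

definition slopeok :: "('a \<Rightarrow> int) \<Rightarrow> int \<Rightarrow> bool" where
  "slopeok z c \<longleftrightarrow> (\<forall>k l. shift z 1 k l \<in> mdom f \<longrightarrow> v z + c \<le> v (shift z 1 k l))"

definition cpair :: "('a \<Rightarrow> int) \<Rightarrow> int \<Rightarrow> 'a \<Rightarrow> 'a \<Rightarrow> bool" where
  "cpair z c k l \<longleftrightarrow> k \<noteq> l \<and> shift z 1 k l \<in> mdom f \<and> v (shift z 1 k l) = v z + c"

lemma two_cases:
  fixes y :: "'a \<Rightarrow> int" and i j k l :: 'a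
  defines "a \<equiv> shift (shift y 1 i j) 1 k l"
  shows "a = y \<or> a i > y i \<or> a k > y k"
  unfolding a_def shift_def unitv_def by (auto simp: fun_eq_iff)

lemma decomp:
  fixes y :: "'a \<Rightarrow> int" and i j k l :: 'a
  defines "a \<equiv> shift (shift y 1 i j) 1 k l"
  assumes "a p > y p" "a q < y q"
  shows "(p = i \<and> q = j \<and> shift a (-1) p q = shift y 1 k l) \<or>
         (p = i \<and> q = l \<and> shift a (-1) p q = shift y 1 k j) \<or>
         (p = k \<and> q = j \<and> shift a (-1) p q = shift y 1 i l) \<or>
         (p = k \<and> q = l \<and> shift a (-1) p q = shift y 1 i j)"
proof -
  have p: "p = i \<or> p = k" using assms(2) unfolding a_def shift_def unitv_def
    by (auto split: if_splits)
  have q: "q = j \<or> q = l" using assms(3) unfolding a_def shift_def unitv_def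
    by (auto split: if_splits)
  from p q show ?thesis unfolding a_def shift_def unitv_def
    by (auto simp: fun_eq_iff)
qed

lemma L0:
  assumes y: "y \<in> mdom f" and so: "slopeok y c" and c: "c \<le> 0"
    and aD: "shift (shift y 1 i j) 1 k l \<in> mdom f"
  shows "v y + 2*c \<le> v (shift (shift y 1 i j) 1 k l)"
proof -
  define a where "a = shift (shift y 1 i j) 1 k l"
  have aD': "a \<in> mdom f" using aD a_def by simp
  consider "a = y" | p where "a p > y p" "p = i \<or> p = k"
    using two_cases[of y i j k l] a_def by blast
  then show ?thesis
  proof cases
    case 1 then show ?thesis using c a_def by simp
  next
    case 2
    from exch[OF aD' y 2(1)] obtain q where q: "a q < y q" and a': "shift a (-1) p q \<in> mdom f"
      and y': "shift y 1 p q \<in> mdom f"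
      and le: "v (shift a (-1) p q) + v (shift y 1 p q) \<le> v a + v y" by blast
    have "\<exists>r s. shift a (-1) p q = shift y 1 r s"
      using decomp[where y=y and i=i and j=j and k=k and l=l and p=p and q=q] 2(1) q a_def by blast
    then obtain r s where rs: "shift a (-1) p q = shift y 1 r s" by blast
    have "v y + c \<le> v (shift a (-1) p q)" using so a' rs unfolding slopeok_def by simp
    moreover have "v y + c \<le> v (shift y 1 p q)" using so y' unfolding slopeok_def by simp
    ultimately show ?thesis using le a_def by simp
  qed
qed

lemma L1:
  assumes y: "y \<in> mdom f" and so: "slopeok y c" and c: "c \<le> 0" and cp: "cpair y c i j"
  shows "shift y 1 i j \<in> mdom f \<and> slopeok (shift y 1 i j) c"
proof -
  have D: "shift y 1 i j \<in> mdom f" and e: "v (shift y 1 i j) = v y + c"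
    using cp unfolding cpair_def by auto
  have "v (shift y 1 i j) + c \<le> v (shift (shift y 1 i j) 1 k l)"
    if "shift (shift y 1 i j) 1 k l \<in> mdom f" for k l
    using L0[OF y so c that] e by linarith
  then show ?thesis unfolding slopeok_def using D by blast
qed

lemma L2:
  assumes y: "y \<in> mdom f" and so: "slopeok y c" and c: "c < 0" and cp: "cpair y c i j"
    and cp1: "cpair (shift y 1 i j) c k l" and ncp: "\<not> cpair y c k l"
  shows "(k = i \<and> l = j) \<or> (k \<noteq> i \<and> cpair y c k j)"
proof -
  define a where "a = shift (shift y 1 i j) 1 k l"
  have ij: "i \<noteq> j" and D1: "shift y 1 i j \<in> mdom f" and e1: "v (shift y 1 i j) = v y + c"
    using cp unfolding cpair_def by auto
  have kl: "k \<noteq> l" and aD: "a \<in> mdom f" and ea: "v a = v y + 2*c"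
    using cp1 e1 unfolding cpair_def a_def by (auto simp del: shift_add)
  show ?thesis
  proof (cases "k = j")
    case True
    have "a = shift y 1 i l" unfolding a_def True shift_def unitv_def by (auto simp: fun_eq_iff)
    hence "v y + c \<le> v a" using so aD unfolding slopeok_def by simp
    with ea c have False by simp
    thus ?thesis ..
  next
    case kj: False
    have gt: "a k > y k" using kj kl unfolding a_def shift_def unitv_def by auto
    from exch[OF aD y gt] obtain q where q: "a q < y q" and a': "shift a (-1) k q \<in> mdom f"
      and y': "shift y 1 k q \<in> mdom f"
      and le: "v (shift a (-1) k q) + v (shift y 1 k q) \<le> v a + v y" by blast
    have dd: "(k = i \<and> q = j \<and> shift a (-1) k q = shift y 1 k l) \<or>
         (k = i \<and> q = l \<and> shift a (-1) k q = shift y 1 k j) \<or>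
         (q = j \<and> shift a (-1) k q = shift y 1 i l) \<or>
         (q = l \<and> shift a (-1) k q = shift y 1 i j)"
      using decomp[where y=y and i=i and j=j and k=k and l=l and p=k and q=q] gt q a_def by blast
    have qq: "q = j \<or> q = l" using dd by blast
    have "\<exists>r s. shift a (-1) k q = shift y 1 r s" using dd by blast
    then obtain r s where rs: "shift a (-1) k q = shift y 1 r s" by blast
    have b1: "v y + c \<le> v (shift a (-1) k q)" using so a' rs unfolding slopeok_def by simp
    have b2: "v y + c \<le> v (shift y 1 k q)" using so y' unfolding slopeok_def by simp
    have eq2: "v (shift y 1 k q) = v y + c" and eq1: "v (shift a (-1) k q) = v y + c"
      using b1 b2 le ea by linarith+
    show ?thesis
    proof (cases "q = l")
      case True
      then show ?thesis using ncp kl y' eq2 unfolding cpair_def by auto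
    next
      case False
      hence qj: "q = j" using qq by blast
      have ckj: "cpair y c k j" using kj y' eq2 qj unfolding cpair_def by auto
      show ?thesis
      proof (cases "k = i")
        case False thus ?thesis using ckj by blast
      next
        case True
        have "shift a (-1) k q = shift y 1 k l" using dd False True by auto
        hence "cpair y c k l" using kl a' eq1 unfolding cpair_def by auto
        with ncp show ?thesis by blast
      qed
    qed
  qed
qed

lemma EXL:
  assumes ij: "i \<noteq> j" and ab: "a < b" and Da: "shift z a i j \<in> mdom f" and Db: "shift z b i j \<in> mdom f"
  shows "shift z (a+1) i j \<in> mdom f \<and> shift z (b-1) i j \<in> mdom f \<and>
    v (shift z (a+1) i j) + v (shift z (b-1) i j) \<le> v (shift z a i j) + v (shift z b i j)"
proof -
  have gt: "shift z b i j i > shift z a i j i" using ij ab by (simp add: shift_def unitv_def)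
  from exch[OF Db Da gt] obtain q where q: "shift z b i j q < shift z a i j q"
    and A: "shift (shift z b i j) (-1) i q \<in> mdom f" and B: "shift (shift z a i j) 1 i q \<in> mdom f"
    and le: "v (shift (shift z b i j) (-1) i q) + v (shift (shift z a i j) 1 i q) \<le> v (shift z b i j) + v (shift z a i j)"
    by blast
  have "q = j"
  proof (rule ccontr)
    assume "q \<noteq> j"
    with q ab show False by (auto simp: shift_def unitv_def split: if_splits)
  qed
  with A B le show ?thesis by (simp add: algebra_simps)
qed

lemma dom_interval:
  assumes ij: "i \<noteq> j"
  shows "shift z a i j \<in> mdom f \<Longrightarrow> shift z b i j \<in> mdom f \<Longrightarrow> a \<le> t \<Longrightarrow> t \<le> b \<Longrightarrow> shift z t i j \<in> mdom f"
proof (induction "nat (b - a)" arbitrary: a)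
  case 0
  hence "t = a" by linarith
  with 0 show ?case by simp
next
  case (Suc n)
  show ?case
  proof (cases "t = a")
    case True then show ?thesis using Suc by simp
  next
    case False
    have "shift z (a+1) i j \<in> mdom f" using EXL[OF ij _ Suc(3) Suc(4)] Suc(2) by simp
    moreover have "n = nat (b - (a+1))" using Suc(2) by simp
    ultimately show ?thesis using Suc False by simp
  qed
qed

lemma line:
  assumes z: "z \<in> mdom f" and ij: "i \<noteq> j" and cp: "cpair z c i j"
    and Dl: "shift z (int lam) i j \<in> mdom f" and el: "v (shift z (int lam) i j) = v z + int lam * c"
    and m: "m \<le> lam"
  shows "shift z (int m) i j \<in> mdom f \<and> v (shift z (int m) i j) = v z + int m * c"
proof -
  define g where "g m = v (shift z (int m) i j)" for m
  have D: "shift z (int m) i j \<in> mdom f" if "m \<le> lam" for m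
    using dom_interval[OF ij, of z 0 "int lam" "int m"] z Dl that by simp
  have g0: "g 0 = v z" unfolding g_def by simp
  have g1: "g 1 = v z + c" using cp unfolding g_def cpair_def by simp
  have cv: "2 * g (m+1) \<le> g m + g (m+2)" if "m + 2 \<le> lam" for m
  proof -
    have "shift z (int m) i j \<in> mdom f" using D that by simp
    moreover have "shift z (int (m+2)) i j \<in> mdom f" using D that by blast
    hence "shift z (int m + 2) i j \<in> mdom f" by (simp add: add.commute)
    ultimately have "shift z (int m) i j \<in> mdom f" "shift z (int m + 2) i j \<in> mdom f" by blast+
    from EXL[OF ij _ this] show ?thesis unfolding g_def by (simp add: add.commute)
  qed
  have sl: "g (m+1) - g m \<ge> c" if "m + 1 \<le> lam" for m
    using that
  proof (induction m)
    case 0 then show ?case using g0 g1 by simp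
  next
    case (Suc m)
    have "2 * g (m+1) \<le> g m + g (m+2)" using cv Suc(2) by simp
    with Suc show ?case by simp
  qed
  have fw: "g (a + d) \<ge> g a + int d * c" if "a + d \<le> lam" for a d
    using that
  proof (induction d)
    case 0 then show ?case by simp
  next
    case (Suc d)
    have "g (a + d + 1) - g (a + d) \<ge> c" using sl Suc(2) by simp
    with Suc show ?case by (simp add: algebra_simps)
  qed
  have "g m \<ge> g 0 + int m * c" using fw[of 0 m] m by simp
  moreover have "g lam \<ge> g m + int (lam - m) * c" using fw[of m "lam - m"] m by simp
  moreover have "g lam = g 0 + int lam * c" using el g0 unfolding g_def by simp
  moreover have "int (lam - m) * c = int lam * c - int m * c" using m by (simp add: of_nat_diff algebra_simps)
  ultimately have "g m = v z + int m * c" using g0 by linarith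
  then show ?thesis using D m unfolding g_def by simp
qed

lemma fder_cpair:
  assumes z: "z \<in> mdom f" and ij: "i \<noteq> j"
  shows "fder f z i j = ereal (of_int c) \<longleftrightarrow> cpair z c i j"
proof (cases "shift z 1 i j \<in> mdom f")
  case True
  then show ?thesis using z ij by (auto simp: fder_def cpair_def fv)
next
  case False
  then show ?thesis using z ij by (auto simp: fder_def cpair_def fv notD)
qed

lemma phi_fin: "finite {fder f z i j | i j. True}" "{fder f z i j | i j. True} \<noteq> {}"
proof -
  have "{fder f z i j | i j. True} = (\<lambda>(i,j). fder f z i j) ` UNIV" by auto
  then show "finite {fder f z i j | i j. True}" by simp
  show "{fder f z i j | i j. True} \<noteq> {}" by auto
qed

lemma phi_ge: "ereal e \<le> phi f z \<longleftrightarrow> (\<forall>i j. ereal e \<le> fder f z i j)"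
  unfolding phi_def using phi_fin[of z] by auto

lemma slopeok_phi:
  assumes z: "z \<in> mdom f" and ph: "phi f z = ereal (of_int c)"
  shows "slopeok z c"
  unfolding slopeok_def
proof (intro allI impI)
  fix k l assume D: "shift z 1 k l \<in> mdom f"
  have ge: "ereal (of_int c) \<le> fder f z k l" using ph phi_ge by (metis order_refl)
  show "v z + c \<le> v (shift z 1 k l)"
  proof (cases "k = l")
    case True
    then show ?thesis using ge by (simp add: fder_def)
  next
    case False
    then show ?thesis using ge D z by (simp add: fder_def fv)
  qed
qed

lemma phi_cpair:
  assumes z: "z \<in> mdom f" and ph: "phi f z = ereal (of_int c)" and c: "c < 0"
  shows "\<exists>i j. cpair z c i j"
proof -
  have "phi f z \<in> {fder f z i j | i j. True}" unfolding phi_def using phi_fin[of z] by (rule Min_in)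
  then obtain i j where e: "fder f z i j = ereal (of_int c)" using ph by auto
  hence "i \<noteq> j" using c by (auto simp: fder_def)
  with e fder_cpair[OF z] show ?thesis by blast
qed

lemma phi_final:
  assumes z: "z \<in> mdom f" and so: "slopeok z c" and nc: "\<forall>k l. \<not> cpair z c k l" and c: "c < 0"
  shows "ereal (of_int (c + 1)) \<le> phi f z"
  unfolding phi_ge
proof (intro allI)
  fix i j
  show "ereal (of_int (c + 1)) \<le> fder f z i j"
  proof (cases "i = j")
    case True then show ?thesis using c by (simp add: fder_def)
  next
    case ij: False
    show ?thesis
    proof (cases "shift z 1 i j \<in> mdom f")
      case True
      have "v z + c \<le> v (shift z 1 i j)" using so True unfolding slopeok_def by blast
      moreover have "v (shift z 1 i j) \<noteq> v z + c" using nc True ij unfolding cpair_def by blast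
      ultimately have "v z + c + 1 \<le> v (shift z 1 i j)" by linarith
      then show ?thesis using z True ij by (simp add: fder_def fv)
    next
      case False then show ?thesis using z ij by (simp add: fder_def fv notD)
    qed
  qed
qed

lemma cbar_facts:
  assumes z: "z \<in> mdom f" and cp: "cpair z c i j"
  shows "cbar f z i j \<ge> 1 \<and> shift z (int (cbar f z i j)) i j \<in> mdom f
    \<and> v (shift z (int (cbar f z i j)) i j) = v z + int (cbar f z i j) * c
    \<and> \<not> (shift z (int (cbar f z i j) + 1) i j \<in> mdom f
          \<and> v (shift z (int (cbar f z i j) + 1) i j) = v z + (int (cbar f z i j) + 1) * c)"
proof -
  have ij: "i \<noteq> j" using cp by (simp add: cpair_def)
  have fd: "fder f z i j = ereal (of_int c)" using fder_cpair[OF z ij] cp by simp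
  define S where "S = {l::nat. f (shift z (int l) i j) - f z = ereal (real l) * fder f z i j}"
  have mem: "l \<in> S \<longleftrightarrow> shift z (int l) i j \<in> mdom f \<and> v (shift z (int l) i j) = v z + int l * c" for l
  proof (cases "shift z (int l) i j \<in> mdom f")
    case True
    have "l \<in> S \<longleftrightarrow> real_of_int (v (shift z (int l) i j)) - real_of_int (v z) = real l * real_of_int c"
      unfolding S_def using True z fd by (simp add: fv)
    also have "\<dots> \<longleftrightarrow> v (shift z (int l) i j) = v z + int l * c"
    proof -
      have "real l * real_of_int c = real_of_int (int l * c)" by simp
      then show ?thesis by linarith
    qed
    finally show ?thesis using True by simp
  next
    case False
    then show ?thesis unfolding S_def using z fd by (simp add: fv notD)
  qed
  from BD obtain B where B: "\<forall>x\<in>mdom f. \<forall>i. \<bar>x i\<bar> \<le> B" unfolding bounded_dom_def by blast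
  have "S \<subseteq> {..nat (B - z i)}"
  proof
    fix l assume "l \<in> S"
    hence "shift z (int l) i j \<in> mdom f" using mem by blast
    hence "\<bar>shift z (int l) i j i\<bar> \<le> B" using B by blast
    hence "z i + int l \<le> B" using ij by (simp add: shift_def unitv_def)
    then show "l \<in> {..nat (B - z i)}" by simp
  qed
  hence fin: "finite S" by (rule finite_subset) simp
  have one: "1 \<in> S" using mem cp unfolding cpair_def by simp
  have cb: "cbar f z i j = Max S" unfolding cbar_def S_def by simp
  have "Max S \<in> S" using fin one by (intro Max_in) auto
  moreover have "Max S \<ge> 1" using fin one by simp
  moreover have "Suc (Max S) \<notin> S"
  proof
    assume "Suc (Max S) \<in> S"
    hence "Suc (Max S) \<le> Max S" by (rule Max_ge[OF fin])
    thus False by simp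
  qed
  ultimately show ?thesis unfolding cb using mem[of "Max S"] mem[of "Suc (Max S)"]
    by (simp add: algebra_simps)
qed

lemma long_step:
  assumes z: "z \<in> mdom f" and so: "slopeok z c" and c: "c < 0" and cp: "cpair z c i j"
    and nk: "\<forall>k l. (k,l) \<in> K \<longrightarrow> \<not> cpair z c k l" and ijK: "(i,j) \<notin> K"
    and cl: "\<forall>k l. (k,l) \<in> K \<longrightarrow> k \<noteq> i \<longrightarrow> k \<noteq> j \<longrightarrow> (k,j) \<in> K"
  shows "shift z (int (cbar f z i j)) i j \<in> mdom f \<and> slopeok (shift z (int (cbar f z i j)) i j) c
    \<and> (\<forall>k l. (k,l) \<in> K \<longrightarrow> \<not> cpair (shift z (int (cbar f z i j)) i j) c k l)
    \<and> \<not> cpair (shift z (int (cbar f z i j)) i j) c i j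
    \<and> v (shift z (int (cbar f z i j)) i j) \<le> v z + c"
proof -
  have ij: "i \<noteq> j" using cp by (simp add: cpair_def)
  define lam where "lam = cbar f z i j"
  note cf = cbar_facts[OF z cp, folded lam_def]
  have ln: "shift z (int m) i j \<in> mdom f \<and> v (shift z (int m) i j) = v z + int m * c" if "m \<le> lam" for m
    using line[OF z ij cp _ _ that] cf by blast
  have inv: "slopeok (shift z (int m) i j) c \<and> (\<forall>k l. (k,l) \<in> K \<longrightarrow> \<not> cpair (shift z (int m) i j) c k l)"
    if "m \<le> lam" for m
    using that
  proof (induction m)
    case 0 then show ?case using so nk by simp
  next
    case (Suc m)
    define y where "y = shift z (int m) i j"
    have yD: "y \<in> mdom f" using ln Suc(2) y_def by simp
    have sy: "slopeok y c" and ny: "\<forall>k l. (k,l) \<in> K \<longrightarrow> \<not> cpair y c k l" using Suc y_def by auto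
    have e1: "shift y 1 i j = shift z (int (Suc m)) i j" unfolding y_def by (simp add: add.commute)
    have cpy: "cpair y c i j"
      using ln[of m] ln[of "Suc m"] Suc(2) ij e1 unfolding cpair_def y_def[symmetric]
      by (simp add: algebra_simps)
    have s1: "slopeok (shift y 1 i j) c" using L1[OF yD sy _ cpy] c by simp
    have n1: "\<not> cpair (shift y 1 i j) c k l" if "(k,l) \<in> K" for k l
    proof
      assume a: "cpair (shift y 1 i j) c k l"
      from L2[OF yD sy c cpy a] ny that
      have "k \<noteq> i \<and> cpair y c k j" using ijK by blast
      moreover hence "k \<noteq> j" by (simp add: cpair_def)
      ultimately show False using cl ny that by blast
    qed
    show ?case using s1 n1 e1 by simp
  qed
  have fin: "\<not> cpair (shift z (int lam) i j) c i j"
  proof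
    assume "cpair (shift z (int lam) i j) c i j"
    hence "shift z (int lam + 1) i j \<in> mdom f \<and> v (shift z (int lam + 1) i j) = v z + (int lam + 1) * c"
      using ln[of lam] unfolding cpair_def by (simp add: algebra_simps)
    with cf show False by blast
  qed
  have "v (shift z (int lam) i j) \<le> v z + c"
  proof -
    have "int lam * c \<le> 1 * c" using cf c by (intro mult_right_mono_neg) auto
    then show ?thesis using ln[of lam] by simp
  qed
  then show ?thesis using ln[of lam] inv[of lam] fin unfolding lam_def by simp
qed

definition inv :: "('a \<Rightarrow> int) \<Rightarrow> int \<Rightarrow> ('a \<Rightarrow> int) \<Rightarrow> ('a \<times> 'a) set \<Rightarrow> bool" where
  "inv x c z K \<longleftrightarrow> z \<in> mdom f \<and> slopeok z c \<and> (\<forall>k l. (k,l) \<in> K \<longrightarrow> \<not> cpair z c k l)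
     \<and> (z = x \<or> v z \<le> v x + c)"

definition stp :: "int \<Rightarrow> 'a \<times> 'a \<Rightarrow> ('a \<Rightarrow> int) \<Rightarrow> ('a \<Rightarrow> int)" where
  "stp c = (\<lambda>(i,j) z. if fder f z i j = ereal (of_int c) then shift z (int (cbar f z i j)) i j else z)"

lemma inv_step:
  assumes I: "inv x c z K" and c: "c < 0" and ij: "i \<noteq> j" and ijK: "(i,j) \<notin> K"
    and cl: "\<forall>k l. (k,l) \<in> K \<longrightarrow> k \<noteq> i \<longrightarrow> k \<noteq> j \<longrightarrow> (k,j) \<in> K"
  shows "inv x c (stp c (i,j) z) (insert (i,j) K)"
proof -
  have z: "z \<in> mdom f" and so: "slopeok z c" and nk: "\<forall>k l. (k,l) \<in> K \<longrightarrow> \<not> cpair z c k l"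
    and pr: "z = x \<or> v z \<le> v x + c" using I unfolding inv_def by auto
  show ?thesis
  proof (cases "fder f z i j = ereal (of_int c)")
    case True
    hence cp: "cpair z c i j" using fder_cpair[OF z ij] by simp
    note ls = long_step[OF z so c cp nk ijK cl]
    have "stp c (i,j) z = shift z (int (cbar f z i j)) i j" using True by (simp add: stp_def)
    moreover have "v (shift z (int (cbar f z i j)) i j) \<le> v x + c" using ls pr c by auto
    ultimately show ?thesis using ls unfolding inv_def by auto
  next
    case False
    hence "\<not> cpair z c i j" using fder_cpair[OF z ij] by simp
    moreover have "stp c (i,j) z = z" using False by (simp add: stp_def)
    ultimately show ?thesis using I unfolding inv_def by auto
  qed
qed

lemma inner:
  assumes c: "c < 0" and iI: "i \<notin> I"
  shows "inv x c z ({(k,l). k \<in> I} \<union> {(i,l) | l. l \<in> J}) \<Longrightarrow> distinct js \<Longrightarrow> set js \<inter> J = {}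
    \<Longrightarrow> i \<notin> set js \<Longrightarrow>
    inv x c (fold (stp c) (map (\<lambda>j. (i,j)) js) z) ({(k,l). k \<in> I} \<union> {(i,l) | l. l \<in> J \<union> set js})"
proof (induction js arbitrary: z J)
  case Nil then show ?case by simp
next
  case (Cons j js)
  have st: "inv x c (stp c (i,j) z) (insert (i,j) ({(k,l). k \<in> I} \<union> {(i,l) | l. l \<in> J}))"
    using Cons(2-5) iI by (intro inv_step[OF Cons(2) c]) auto
  have e: "insert (i,j) ({(k,l). k \<in> I} \<union> {(i,l) | l. l \<in> J}) = {(k,l). k \<in> I} \<union> {(i,l) | l. l \<in> insert j J}"
    by auto
  have "inv x c (fold (stp c) (map (\<lambda>j. (i,j)) js) (stp c (i,j) z)) ({(k,l). k \<in> I} \<union> {(i,l) | l. l \<in> insert j J \<union> set js})"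
    using Cons st e by (intro Cons.IH) auto
  then show ?case by (simp add: insert_commute)
qed

lemma inv_mono: "inv x c z K \<Longrightarrow> (\<forall>k l. (k,l) \<in> K' \<longrightarrow> (k,l) \<in> K \<or> k = l) \<Longrightarrow> inv x c z K'"
  unfolding inv_def cpair_def by blast

lemma outer:
  assumes c: "c < 0" and js: "\<forall>i. distinct (jss i) \<and> set (jss i) = UNIV - {i}"
  shows "inv x c z {(k,l). k \<in> I} \<Longrightarrow> distinct ii \<Longrightarrow> set ii \<inter> I = {} \<Longrightarrow>
    inv x c (fold (\<lambda>i. fold (stp c) (map (\<lambda>j. (i,j)) (jss i))) ii z) {(k,l). k \<in> I \<union> set ii}"
proof (induction ii arbitrary: z I)
  case Nil then show ?case by simp
next
  case (Cons i ii)
  have iI: "i \<notin> I" using Cons by auto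
  have a: "inv x c z ({(k,l). k \<in> I} \<union> {(i,l) | l. l \<in> {}})" using Cons by simp
  have "inv x c (fold (stp c) (map (\<lambda>j. (i,j)) (jss i)) z) ({(k,l). k \<in> I} \<union> {(i,l) | l. l \<in> {} \<union> set (jss i)})"
    using inner[OF c iI a, of "jss i"] js by simp
  hence b: "inv x c (fold (stp c) (map (\<lambda>j. (i,j)) (jss i)) z) {(k,l). k \<in> insert i I}"
    by (rule inv_mono) (use js in auto)
  have "inv x c (fold (\<lambda>i. fold (stp c) (map (\<lambda>j. (i,j)) (jss i))) ii (fold (stp c) (map (\<lambda>j. (i,j)) (jss i)) z)) {(k,l). k \<in> insert i I \<union> set ii}"
    using Cons b by (intro Cons.IH) auto
  then show ?case by simp
qed

lemma fold_concat': "fold g (concat xss) s = fold (fold g) xss s"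
  by (induction xss arbitrary: s) auto

lemma INC:
  assumes x: "x \<in> mdom f" and ph: "phi f x = ereal (of_int c)" and c: "c < 0"
    and out: "IncSlope_out f x y"
  shows "y \<in> mdom f \<and> v y \<le> v x + c \<and> ereal (of_int (c + 1)) \<le> phi f y"
proof -
  from out obtain ii jss where d: "distinct ii" and u: "set ii = UNIV"
    and js: "\<forall>i. distinct (jss i) \<and> set (jss i) = UNIV - {i}"
    and y: "y = incslope_pass f (phi f x) x (concat (map (\<lambda>i. map (\<lambda>j. (i, j)) (jss i)) ii))"
    unfolding IncSlope_out_def by blast
  have "y = fold (stp c) (concat (map (\<lambda>i. map (\<lambda>j. (i, j)) (jss i)) ii)) x"
    unfolding y incslope_pass_def ph stp_def ..
  also have "\<dots> = fold (\<lambda>i. fold (stp c) (map (\<lambda>j. (i,j)) (jss i))) ii x"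
    by (simp add: fold_concat' fold_map o_def)
  finally have ye: "y = \<dots>" .
  have i0: "inv x c x {(k,l). k \<in> {}}" using x slopeok_phi[OF x ph] unfolding inv_def by simp
  have "inv x c y {(k,l). k \<in> {} \<union> set ii}" unfolding ye by (rule outer[OF c js i0 d]) simp
  hence I: "y \<in> mdom f" "slopeok y c" "\<forall>k l. \<not> cpair y c k l" "y = x \<or> v y \<le> v x + c"
    using u unfolding inv_def by auto
  have "y \<noteq> x" using I(3) phi_cpair[OF x ph c] by blast
  then show ?thesis using I phi_final[OF I(1) I(2) I(3) c] by auto
qed

lemma phi_int: assumes z: "z \<in> mdom f" shows "\<exists>p. phi f z = ereal (of_int p)"
proof -
  have "phi f z \<in> {fder f z i j | i j. True}" unfolding phi_def using phi_fin[of z] by (rule Min_in)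
  then obtain i j where e: "phi f z = fder f z i j" by auto
  have "phi f z \<le> fder f z i i" unfolding phi_def using phi_fin[of z] by (intro Min_le) auto
  hence le0: "phi f z \<le> 0" by (simp add: fder_def)
  show ?thesis
  proof (cases "i = j")
    case True then show ?thesis using e by (auto simp: fder_def intro: exI[of _ 0])
  next
    case False
    show ?thesis
    proof (cases "shift z 1 i j \<in> mdom f")
      case True
      hence "phi f z = ereal (of_int (v (shift z 1 i j) - v z))" using e False z by (simp add: fder_def fv)
      then show ?thesis by blast
    next
      case F: False
      hence "phi f z = \<infinity>" using e False z by (simp add: fder_def fv notD)
      with le0 show ?thesis by simp
    qed
  qed
qed

lemma finite_dom: "finite (mdom f)"
proof -
  from BD obtain B where B: "\<forall>x\<in>mdom f. \<forall>i. \<bar>x i\<bar> \<le> B" unfolding bounded_dom_def by blast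
  have "finite {g :: 'a \<Rightarrow> int. \<forall>x. (x \<in> UNIV \<longrightarrow> g x \<in> {-B..B}) \<and> (x \<notin> UNIV \<longrightarrow> g x = 0)}"
    by (rule finite_set_of_finite_funs) auto
  moreover have "mdom f \<subseteq> {g :: 'a \<Rightarrow> int. \<forall>x. (x \<in> UNIV \<longrightarrow> g x \<in> {-B..B}) \<and> (x \<notin> UNIV \<longrightarrow> g x = 0)}"
  proof
    fix g assume "g \<in> mdom f"
    have "-B \<le> g x \<and> g x \<le> B" for x
    proof -
      have "\<bar>g x\<bar> \<le> B" using B \<open>g \<in> mdom f\<close> by blast
      thus ?thesis by arith
    qed
    then show "g \<in> {g :: 'a \<Rightarrow> int. \<forall>x. (x \<in> UNIV \<longrightarrow> g x \<in> {-B..B}) \<and> (x \<notin> UNIV \<longrightarrow> g x = 0)}"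
      by simp
  qed
  ultimately show ?thesis by (rule finite_subset[rotated])
qed

lemma run_bound:
  assumes x0: "x0 \<in> mdom f" and run: "LSD2_run f x0 k"
  shows "\<exists>w \<in> mdom f. int k * (int k + 1) \<le> 2 * (v x0 - v w)"
proof -
  from run obtain xs where s0: "xs 0 = x0"
    and st: "\<forall>t<k. phi f (xs t) < 0 \<and> IncSlope_out f (xs t) (xs (Suc t))"
    and en: "phi f (xs k) = 0" unfolding LSD2_run_def by blast
  have D: "xs t \<in> mdom f" if "t \<le> k" for t
    using that
  proof (induction t)
    case 0 then show ?case using s0 x0 by simp
  next
    case (Suc t)
    hence xt: "xs t \<in> mdom f" by simp
    obtain p where p: "phi f (xs t) = ereal (of_int p)" using phi_int[OF xt] by blast
    have "phi f (xs t) < 0" using st Suc(2) by simp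
    hence pn: "p < 0" using p by simp
    have "IncSlope_out f (xs t) (xs (Suc t))" using st Suc(2) by simp
    from INC[OF xt p pn this] show ?case by blast
  qed
  have ex: "\<exists>p. t \<le> k \<longrightarrow> phi f (xs t) = ereal (of_int p)" for t
  proof (cases "t \<le> k")
    case True
    from phi_int[OF D[OF True]] obtain q where "phi f (xs t) = ereal (of_int q)" ..
    thus ?thesis by blast
  next
    case False thus ?thesis by blast
  qed
  hence "\<forall>t. \<exists>p. t \<le> k \<longrightarrow> phi f (xs t) = ereal (of_int p)" by (rule allI)
  then obtain p where p0: "\<forall>t. t \<le> k \<longrightarrow> phi f (xs t) = ereal (of_int (p t))"
    using choice[of "\<lambda>t p. t \<le> k \<longrightarrow> phi f (xs t) = ereal (of_int p)"] by blast
  have p: "phi f (xs t) = ereal (of_int (p t))" if "t \<le> k" for t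
  proof -
    from p0 have "t \<le> k \<longrightarrow> phi f (xs t) = ereal (of_int (p t))" by (rule spec)
    thus ?thesis using that by (rule mp)
  qed
  have pk: "p k = 0" using p[of k] en by simp
  have stepf: "p t < 0 \<and> v (xs (Suc t)) \<le> v (xs t) + p t \<and> p t + 1 \<le> p (Suc t)" if "t < k" for t
  proof -
    have "phi f (xs t) < 0" using st that by simp
    hence pt: "p t < 0" using p[of t] that by simp
    have inc: "IncSlope_out f (xs t) (xs (Suc t))" using st that by simp
    have Dt: "xs t \<in> mdom f" using D that by simp
    have pp: "phi f (xs t) = ereal (of_int (p t))" using p that by simp
    from INC[OF Dt pp pt inc] have "v (xs (Suc t)) \<le> v (xs t) + p t \<and>
        ereal (of_int (p t + 1)) \<le> phi f (xs (Suc t))" by blast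
    moreover have "phi f (xs (Suc t)) = ereal (of_int (p (Suc t)))" using p that by simp
    ultimately show ?thesis using pt by simp
  qed
  have pd: "p t + int d \<le> p (t + d)" if "t + d \<le> k" for t d
    using that
  proof (induction d)
    case 0 then show ?case by simp
  next
    case (Suc d)
    have "p (t+d) + 1 \<le> p (Suc (t + d))" using stepf Suc(2) by simp
    with Suc show ?case by simp
  qed
  have pb: "p t \<le> - int (k - t)" if "t \<le> k" for t
    using pd[of t "k - t"] that pk by simp
  have vb: "2 * v (xs m) \<le> 2 * v x0 - int m * (2 * int k - int m + 1)" if "m \<le> k" for m
    using that
  proof (induction m)
    case 0 then show ?case using s0 by simp
  next
    case (Suc m)
    have a: "v (xs (Suc m)) \<le> v (xs m) + p m" using stepf Suc(2) by simp
    have b: "p m \<le> - int (k - m)" using pb Suc(2) by simp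
    have c: "int (k - m) = int k - int m" using Suc(2) by simp
    have e: "int (Suc m) * (2 * int k - int (Suc m) + 1) = int m * (2 * int k - int m + 1) + 2 * (int k - int m)"
      by (simp add: algebra_simps)
    show ?case using Suc a b c e by simp
  qed
  have "2 * v (xs k) \<le> 2 * v x0 - int k * (int k + 1)"
    using vb[of k] by (simp add: algebra_simps)
  then show ?thesis using D[of k] by (intro bexI[of _ "xs k"]) auto
qed

lemma main_loc:
  assumes x0: "x0 \<in> mdom f" and run: "LSD2_run f x0 k"
  shows "ereal ((real k)\<^sup>2 / 2) \<le> f x0 - Min (f ` mdom f)
       \<and> real k \<le> sqrt (2 * real_of_ereal (f x0 - Min (f ` mdom f)))"
proof -
  obtain w where w: "w \<in> mdom f" and wb: "int k * (int k + 1) \<le> 2 * (v x0 - v w)"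
    using run_bound[OF x0 run] by blast
  have fin: "finite (f ` mdom f)" using finite_dom by simp
  have ne: "f ` mdom f \<noteq> {}" using x0 by auto
  obtain u where u: "u \<in> mdom f" and mu: "Min (f ` mdom f) = f u"
    using Min_in[OF fin ne] by auto
  have "Min (f ` mdom f) \<le> f w" by (rule Min_le[OF fin]) (use w in auto)
  hence "f u \<le> f w" using mu by simp
  hence uw: "v u \<le> v w" using u w by (simp add: fv)
  have eq: "f x0 - Min (f ` mdom f) = ereal (of_int (v x0 - v u))" using mu u x0 by (simp add: fv)
  have k2: "int k * int k \<le> 2 * (v x0 - v u)" using wb uw by (simp add: algebra_simps)
  hence "real_of_int (int k * int k) \<le> real_of_int (2 * (v x0 - v u))" by (simp only: of_int_le_iff)
  hence k2r: "(real k)\<^sup>2 \<le> 2 * real_of_int (v x0 - v u)"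
    by (simp add: power2_eq_square)
  show ?thesis unfolding eq using k2r by (auto intro: real_le_rsqrt)
qed

end

theorem mainTheorem6:
  fixes f :: "('a::finite \<Rightarrow> int) \<Rightarrow> ereal" and x0 :: "'a \<Rightarrow> int" and k :: nat
  assumes "M_convex f" and "int_valued f" and "bounded_dom f"
    and "x0 \<in> mdom f"
    and "LSD2_run f x0 k"
  shows "ereal ((real k)\<^sup>2 / 2) \<le> f x0 - Min (f ` mdom f)
       \<and> real k \<le> sqrt (2 * real_of_ereal (f x0 - Min (f ` mdom f)))"
proof -
  interpret mc f using assms(1-3) by unfold_locales
  show ?thesis using main_loc[OF assms(4,5)] .
qed

end
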